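(* Let $r$ and $k$ be positive integers with $r+k\equiv 1\pmod 2$ and $k\le r$, let $H$ be the complete graph with $V(H)=[r+k]$, and let $\mathbf{E}=(E_0,E_1,E_2)$ be an ordered partition of $E(H)$. If $|E_1|+2|E_2|<\min\left\{3(r+k-1),\ \frac18(r+k+3)(r+k+5)\right\}$, then $H$ has an almost perfect matching which is also a good matching for $\mathbf{E}$.
   Context: $[m]=\{1,\dots,m\}$. An ordered partition $(E_0,E_1,E_2)$ of a set is a triple of pairwise disjoint (possibly empty) sets with that union. A matching $M$ is a good matching for $\mathbf{E}$ if $M\cap E_2=\emptyset$ and $|M\cap E_1|\le1$. An almost perfect matching of $H$ is a matching covering all but exactly one vertex of $H$. *)

theory Defs
  imports Complex_Main
begin

definition complete_edges :: "'a set \<Rightarrow> 'a set set" where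
  "complete_edges V = {e. e \<subseteq> V \<and> card e = 2}"

definition ordered_partition3 :: "'b set \<Rightarrow> 'b set \<Rightarrow> 'b set \<Rightarrow> 'b set \<Rightarrow> bool" where
  "ordered_partition3 E E0 E1 E2 \<longleftrightarrow>
     E0 \<inter> E1 = {} \<and> E0 \<inter> E2 = {} \<and> E1 \<inter> E2 = {} \<and> E0 \<union> E1 \<union> E2 = E"

definition is_matching :: "'a set set \<Rightarrow> 'a set set \<Rightarrow> bool" where
  "is_matching E M \<longleftrightarrow> M \<subseteq> E \<and> (\<forall>e\<in>M. \<forall>f\<in>M. e \<noteq> f \<longrightarrow> e \<inter> f = {})"

definition almost_perfect_matching :: "'a set \<Rightarrow> 'a set set \<Rightarrow> 'a set set \<Rightarrow> bool" where
  "almost_perfect_matching V E M \<longleftrightarrow> is_matching E M \<and> card (V - \<Union>M) = 1"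

definition good_matching :: "'a set set \<Rightarrow> 'a set set \<Rightarrow> 'a set set \<Rightarrow> bool" where
  "good_matching E1 E2 M \<longleftrightarrow> M \<inter> E2 = {} \<and> card (M \<inter> E1) \<le> 1"

end

theory Submission
  imports Defs
begin


lemma edge_in_complete: "{p,q} \<in> complete_edges V \<longleftrightarrow> p \<in> V \<and> q \<in> V \<and> p \<noteq> q"
  by (auto simp: complete_edges_def card_insert_if)

lemma complete_edgesE:
  assumes "e \<in> complete_edges V"
  obtains a b where "e = {a,b}" "a \<noteq> b" "a \<in> V" "b \<in> V"
  using assms unfolding complete_edges_def by (auto simp: card_2_iff)

lemma finite_complete_edges: "finite V \<Longrightarrow> finite (complete_edges V)"
  unfolding complete_edges_def by (rule finite_subset[of _ "Pow V"]) auto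

lemma Union_complete_edges: "M \<subseteq> complete_edges V \<Longrightarrow> \<Union>M \<subseteq> V"
  unfolding complete_edges_def by auto

lemma card_Union_matching:
  assumes "M \<subseteq> complete_edges V" "finite V" "\<forall>e\<in>M. \<forall>f\<in>M. e \<noteq> f \<longrightarrow> e \<inter> f = {}"
  shows "card (\<Union>M) = 2 * card M"
proof -
  have fin: "finite A" if "A \<in> M" for A
    using that assms(1,2) unfolding complete_edges_def by (auto intro: finite_subset)
  have "card (\<Union>M) = sum card M"
    by (rule card_Union_disjoint) (use assms(3) fin in \<open>auto simp: pairwise_def disjnt_def\<close>)
  also have "\<dots> = sum (\<lambda>_. 2) M" using assms(1) by (intro sum.cong) (auto simp: complete_edges_def)
  finally show ?thesis by simp
qed

lemma matching_mono: "is_matching E M \<Longrightarrow> E \<subseteq> E' \<Longrightarrow> is_matching E' M"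
  unfolding is_matching_def by blast
lemma matching_insert: "is_matching E M \<Longrightarrow> f \<in> E \<Longrightarrow> f \<inter> \<Union>M = {} \<Longrightarrow> is_matching E (insert f M)"
  unfolding is_matching_def by blast
lemma matching_diff: "is_matching E M \<Longrightarrow> is_matching E (M - X)"
  unfolding is_matching_def by blast
lemma Union_diff_edge: "is_matching E M \<Longrightarrow> e \<in> M \<Longrightarrow> \<Union>(M - {e}) = \<Union>M - e"
  unfolding is_matching_def by blast
lemma Union_diff_edges2: "is_matching E M \<Longrightarrow> e \<in> M \<Longrightarrow> f \<in> M \<Longrightarrow> \<Union>(M - {e,f}) = \<Union>M - e - f"
  unfolding is_matching_def by blast

lemma swap_matching:
  assumes "is_matching E M" "{a,b} \<in> M" "a \<noteq> b" "x \<notin> \<Union>M" "y \<notin> \<Union>M" "x \<noteq> y" "{x,a} \<in> E" "{y,b} \<in> E"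
  shows "is_matching E (insert {x,a} (insert {y,b} (M - {{a,b}})))"
    and "\<Union>(insert {x,a} (insert {y,b} (M - {{a,b}}))) = \<Union>M \<union> {x,y}"
proof -
  have U1: "\<Union>(M - {{a,b}}) = \<Union>M - {a,b}" using Union_diff_edge[OF assms(1,2)] .
  have ab: "a \<in> \<Union>M" "b \<in> \<Union>M" using assms(2) by auto
  have m1: "is_matching E (insert {y,b} (M - {{a,b}}))"
    by (rule matching_insert[OF matching_diff[OF assms(1)] assms(8)]) (use U1 assms(5) in auto)
  show "is_matching E (insert {x,a} (insert {y,b} (M - {{a,b}})))"
    by (rule matching_insert[OF m1 assms(7)]) (use U1 assms ab in auto)
  show "\<Union>(insert {x,a} (insert {y,b} (M - {{a,b}}))) = \<Union>M \<union> {x,y}"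
    using U1 ab by auto
qed

lemma path5_matching:
  assumes "is_matching E M" "{a,b} \<in> M" "{c,d} \<in> M" "{a,b} \<noteq> {c,d}" "a \<noteq> b" "c \<noteq> d"
    "x \<notin> \<Union>M" "y \<notin> \<Union>M" "x \<noteq> y" "{x,a} \<in> E" "{c,y} \<in> E" "{b,d} \<in> E"
  shows "is_matching E (insert {x,a} (insert {c,y} (insert {b,d} (M - {{a,b},{c,d}}))))"
    and "\<Union>(insert {x,a} (insert {c,y} (insert {b,d} (M - {{a,b},{c,d}})))) = \<Union>M \<union> {x,y}"
proof -
  have "\<forall>e\<in>M. \<forall>f\<in>M. e \<noteq> f \<longrightarrow> e \<inter> f = {}" using assms(1) by (simp add: is_matching_def)
  hence dj: "{a,b} \<inter> {c,d} = {}" using assms(2,3,4) by simp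
  have U1: "\<Union>(M - {{a,b},{c,d}}) = \<Union>M - {a,b} - {c,d}" using Union_diff_edges2[OF assms(1,2,3)] .
  have ab: "a \<in> \<Union>M" "b \<in> \<Union>M" "c \<in> \<Union>M" "d \<in> \<Union>M" using assms(2,3) by auto
  have ne: "a \<noteq> c" "a \<noteq> d" "b \<noteq> c" "b \<noteq> d" using dj by auto
  have ne2: "x \<noteq> a" "x \<noteq> b" "x \<noteq> c" "x \<noteq> d" "y \<noteq> a" "y \<noteq> b" "y \<noteq> c" "y \<noteq> d"
    using ab assms(7,8) by auto
  have m1: "is_matching E (insert {b,d} (M - {{a,b},{c,d}}))"
    by (rule matching_insert[OF matching_diff[OF assms(1)] assms(12)]) (unfold U1, blast)
  have m2: "is_matching E (insert {c,y} (insert {b,d} (M - {{a,b},{c,d}})))"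
    by (rule matching_insert[OF m1 assms(11)]) (simp only: Union_insert U1, use ne ne2 assms(6,8) in blast)
  show "is_matching E (insert {x,a} (insert {c,y} (insert {b,d} (M - {{a,b},{c,d}}))))"
    by (rule matching_insert[OF m2 assms(10)]) (simp only: Union_insert U1, use ne ne2 assms(5,7,9) in blast)
  show "\<Union>(insert {x,a} (insert {c,y} (insert {b,d} (M - {{a,b},{c,d}})))) = \<Union>M \<union> {x,y}"
    using U1 ab by auto
qed

lemma cross_sum:
  fixes h :: "'a set \<Rightarrow> nat"
  assumes "U \<inter> \<Union>M = {}" "finite U" "M \<subseteq> complete_edges V" "finite V"
    "\<forall>e\<in>M. \<forall>f\<in>M. e \<noteq> f \<longrightarrow> e \<inter> f = {}"
  shows "sum h {{p,q} | p q. p \<in> U \<and> q \<in> \<Union>M} = (\<Sum>f\<in>M. \<Sum>p\<in>U. \<Sum>q\<in>f. h {p,q})"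
proof -
  have finM: "finite M" using assms(3,4) finite_complete_edges finite_subset by blast
  have fin: "finite A" if "A \<in> M" for A
    using that assms(3,4) unfolding complete_edges_def by (auto intro: finite_subset)
  have inj: "inj_on (\<lambda>(p,q). {p,q}) (U \<times> \<Union>M)"
    using assms(1) by (auto simp: inj_on_def doubleton_eq_iff)
  have img: "{{p,q} | p q. p \<in> U \<and> q \<in> \<Union>M} = (\<lambda>(p,q). {p,q}) ` (U \<times> \<Union>M)" by auto
  have "sum h {{p,q} | p q. p \<in> U \<and> q \<in> \<Union>M} = (\<Sum>(p,q)\<in>U \<times> \<Union>M. h {p,q})"
    unfolding img by (subst sum.reindex[OF inj]) (simp add: case_prod_unfold comp_def)
  also have "\<dots> = (\<Sum>p\<in>U. \<Sum>q\<in>\<Union>M. h {p,q})" by (rule sum.cartesian_product[symmetric])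
  also have "\<dots> = (\<Sum>p\<in>U. \<Sum>f\<in>M. \<Sum>q\<in>f. h {p,q})"
    by (intro sum.cong refl) (use fin assms(5) in \<open>simp add: sum.Union_disjoint\<close>)
  also have "\<dots> = (\<Sum>f\<in>M. \<Sum>p\<in>U. \<Sum>q\<in>f. h {p,q})" by (rule sum.swap)
  finally show ?thesis .
qed

lemma loc6_aux:
  "\<forall>a1\<in>{0,1,2::nat}. \<forall>a2\<in>{0,1,2::nat}. \<forall>a3\<in>{0,1,2::nat}. \<forall>b1\<in>{0,1,2::nat}. \<forall>b2\<in>{0,1,2::nat}. \<forall>b3\<in>{0,1,2::nat}.
   \<not>(a1 \<le> 1 \<and> b2 = 0) \<and> \<not>(a1 \<le> 1 \<and> b3 = 0) \<and> \<not>(a2 \<le> 1 \<and> b1 = 0) \<and> \<not>(a2 \<le> 1 \<and> b3 = 0) \<and>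
  \<not>(a3 \<le> 1 \<and> b1 = 0) \<and> \<not>(a3 \<le> 1 \<and> b2 = 0) \<and>
  \<not>(b1 \<le> 1 \<and> a2 = 0) \<and> \<not>(b1 \<le> 1 \<and> a3 = 0) \<and> \<not>(b2 \<le> 1 \<and> a1 = 0) \<and> \<not>(b2 \<le> 1 \<and> a3 = 0) \<and>
  \<not>(b3 \<le> 1 \<and> a1 = 0) \<and> \<not>(b3 \<le> 1 \<and> a2 = 0)
  \<longrightarrow> a1+a2+a3+b1+b2+b3 \<ge> 6"
  by simp

lemma loc6:
  fixes a1 a2 a3 b1 b2 b3 :: nat
  assumes "a1 \<le> 2" "a2 \<le> 2" "a3 \<le> 2" "b1 \<le> 2" "b2 \<le> 2" "b3 \<le> 2"
  and "\<not>(a1 \<le> 1 \<and> b2 = 0)" "\<not>(a1 \<le> 1 \<and> b3 = 0)" "\<not>(a2 \<le> 1 \<and> b1 = 0)" "\<not>(a2 \<le> 1 \<and> b3 = 0)"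
  "\<not>(a3 \<le> 1 \<and> b1 = 0)" "\<not>(a3 \<le> 1 \<and> b2 = 0)"
  and "\<not>(b1 \<le> 1 \<and> a2 = 0)" "\<not>(b1 \<le> 1 \<and> a3 = 0)" "\<not>(b2 \<le> 1 \<and> a1 = 0)" "\<not>(b2 \<le> 1 \<and> a3 = 0)"
  "\<not>(b3 \<le> 1 \<and> a1 = 0)" "\<not>(b3 \<le> 1 \<and> a2 = 0)"
  shows "a1+a2+a3+b1+b2+b3 \<ge> 6"
proof -
  have h: "a1 \<in> {0,1,2}" "a2 \<in> {0,1,2}" "a3 \<in> {0,1,2}" "b1 \<in> {0,1,2}" "b2 \<in> {0,1,2}" "b3 \<in> {0,1,2}"
    using assms(1-6) by auto
  show ?thesis
    by (rule loc6_aux[rule_format, OF h]) (intro conjI; fact assms)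
qed

lemma arith5:
  fixes t m W :: nat
  assumes "t \<le> m" and "W \<ge> 10 + 5*t + 8*(m-t) + t*(t-1) div 2"
  shows "W + 3 \<ge> 3*(5+2*m) \<or> 8*W \<ge> (5+2*m+3)*(5+2*m+5)"
proof -
  have ev: "even (t*(t-1))" by (cases "even t") (auto simp: odd_pos)
  define P where "P = t*(t-1)"
  have e: "2*(P div 2) = P" using ev unfolding P_def by simp
  have iP: "int P = int t * (int t - 1)" unfolding P_def by (cases t) (simp_all add: algebra_simps)
  have imt: "int (m - t) = int m - int t" using assms(1) by simp
  define S where "S = 10 + 5*t + 8*(m-t) + P div 2"
  have "2*S = 20 + 10*t + 16*(m-t) + P" unfolding S_def using e by simp
  hence "int (2*S) = int (20 + 10*t + 16*(m-t) + P)" by simp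
  hence S2: "2 * int S = 20 + 10*int t + 16*(int m - int t) + int t*(int t - 1)"
    using iP imt by simp
  have WS: "W \<ge> S" using assms(2) unfolding S_def P_def .
  show ?thesis
  proof (cases "m \<ge> 4")
    case True
    have "(int t - 3)*(int t - 4) \<ge> 0"
    proof (cases "t \<le> 3")
      case True thus ?thesis by (intro mult_nonpos_nonpos) auto
    next
      case False thus ?thesis by (intro mult_nonneg_nonneg) auto
    qed
    hence "2 * int S \<ge> 24 + 12*int m" using S2 True by (simp add: algebra_simps) 
    hence "int S + 3 \<ge> 3*(5+2*int m)" by presburger
    hence "S + 3 \<ge> 3*(5+2*m)" by presburger
    thus ?thesis using WS by auto
  next
    case False
    have "(int m - int t)*(7 - int m - int t) \<ge> 0"
      using False assms(1) by (intro mult_nonneg_nonneg) auto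
    hence "2 * int S \<ge> (int m+4)*(int m+5)" using S2 by (simp add: algebra_simps)
    hence "8 * int S \<ge> (5+2*int m+3)*(5+2*int m+5)" by (simp add: algebra_simps) 
    hence "int (8*S) \<ge> int ((5+2*m+3)*(5+2*m+5))" by simp
    hence "8*S \<ge> (5+2*m+3)*(5+2*m+5)" by linarith
    thus ?thesis using WS by auto
  qed
qed

lemma arith7:
  fixes u m W :: nat
  assumes "u \<ge> 6" and "W \<ge> u*(u-1) div 2 + u*m"
  shows "W + 3 \<ge> 3*(u+2*m)"
proof -
  define c where "c = u - 1"
  have uc: "u = c + 1" using assms(1) unfolding c_def by simp
  have "u*c \<ge> 6*c" using assms(1) by (intro mult_right_mono) auto
  hence "u*c div 2 \<ge> 6*c div 2" using div_le_mono by blast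
  hence X: "u*c div 2 \<ge> 3*c" by simp
  have Y: "u*m \<ge> 6*m" using assms(1) by (intro mult_right_mono) auto
  define X' where "X' = u*c div 2"
  define Y' where "Y' = u*m"
  have "W \<ge> X' + Y'" using assms(2) unfolding X'_def Y'_def c_def .
  thus ?thesis using X[folded X'_def] Y[folded Y'_def] uc by presburger
qed


context
  fixes V :: "'a set" and E0 E1 E2 :: "'a set set"
  assumes finV: "finite V"
    and part: "ordered_partition3 (complete_edges V) E0 E1 E2"
begin

lemma E_sub: "E0 \<subseteq> complete_edges V" "E1 \<subseteq> complete_edges V" "E2 \<subseteq> complete_edges V"
  using part unfolding ordered_partition3_def by auto

lemma E_disj: "E0 \<inter> E1 = {}" "E0 \<inter> E2 = {}" "E1 \<inter> E2 = {}"
  using part unfolding ordered_partition3_def by auto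

lemma E_un: "E0 \<union> E1 \<union> E2 = complete_edges V"
  using part unfolding ordered_partition3_def by auto

lemma finK: "finite (complete_edges V)" using finV by (rule finite_complete_edges)

lemma answer:
  assumes "is_matching (complete_edges V) N" "N \<subseteq> insert f E0" "f \<notin> E2" "card (V - \<Union>N) = 1"
  shows "\<exists>M. almost_perfect_matching V (complete_edges V) M \<and> good_matching E1 E2 M"
proof -
  have "N \<inter> E2 = {}" using assms(2,3) E_disj by auto
  moreover have "N \<inter> E1 \<subseteq> {f}" using assms(2) E_disj by auto
  hence "card (N \<inter> E1) \<le> card {f}" by (intro card_mono) auto
  hence "card (N \<inter> E1) \<le> 1" by simp
  ultimately show ?thesis using assms unfolding almost_perfect_matching_def good_matching_def by blast
qed

lemma max_matching_exists:
  obtains M where "is_matching E0 M" "\<And>M'. is_matching E0 M' \<Longrightarrow> card M' \<le> card M"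
proof -
  let ?S = "{M. is_matching E0 M}"
  have finE0: "finite E0" using finite_subset[OF E_sub(1) finK] .
  have fin: "finite ?S"
    by (rule finite_subset[of _ "Pow E0"]) (use finE0 in \<open>auto simp: is_matching_def\<close>)
  have "{} \<in> ?S" by (simp add: is_matching_def)
  then have ne: "card ` ?S \<noteq> {}" by blast
  have "Max (card ` ?S) \<in> card ` ?S" using fin ne by (intro Max_in) auto
  then obtain M where "M \<in> ?S" "card M = Max (card ` ?S)" by auto
  moreover have "\<And>M'. M' \<in> ?S \<Longrightarrow> card M' \<le> Max (card ` ?S)" using fin by (intro Max_ge) auto
  ultimately show ?thesis using that by auto
qed

lemma matching_K: "is_matching E0 M \<Longrightarrow> M \<subseteq> complete_edges V"
  using E_sub(1) unfolding is_matching_def by auto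

lemma matching_card_Union: "is_matching E0 M \<Longrightarrow> card (\<Union>M) = 2 * card M"
  using card_Union_matching[OF matching_K finV] unfolding is_matching_def by blast

lemma matching_Union_sub: "is_matching E0 M \<Longrightarrow> \<Union>M \<subseteq> V"
  using Union_complete_edges[OF matching_K] by blast

lemma aug_contra:
  assumes maxM: "\<And>M'. is_matching E0 M' \<Longrightarrow> card M' \<le> card M" and Mm: "is_matching E0 M"
    and Nm: "is_matching E0 N" and NU: "\<Union>N = \<Union>M \<union> {x,y}" and "x \<noteq> y" "x \<notin> \<Union>M" "y \<notin> \<Union>M"
  shows False
proof -
  have c1: "card (\<Union>M) = 2 * card M" using matching_card_Union[OF Mm] .
  have c2: "card (\<Union>N) = 2 * card N" using matching_card_Union[OF Nm] .
  have finU: "finite (\<Union>M)" using matching_Union_sub[OF Mm] finV finite_subset by blast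
  have "\<Union>N = insert x (insert y (\<Union>M))" using NU by auto
  hence "card (\<Union>N) = card (\<Union>M) + 2" using finU assms(5-7) by simp
  hence "card N = card M + 1" using c1 c2 by simp
  thus False using maxM[OF Nm] by simp
qed

lemma sum_wt:
  "(\<Sum>e\<in>complete_edges V. (if e \<in> E1 then 1 else if e \<in> E2 then 2 else 0::nat)) = card E1 + 2 * card E2"
proof -
  have "(\<Sum>e\<in>complete_edges V. (if e \<in> E1 then 1 else if e \<in> E2 then 2 else 0::nat))
      = (\<Sum>e\<in>complete_edges V. of_bool (e \<in> E1) + 2 * of_bool (e \<in> E2))"
    using E_disj(3) by (intro sum.cong) auto
  also have "\<dots> = card (complete_edges V \<inter> {e. e \<in> E1}) + 2 * card (complete_edges V \<inter> {e. e \<in> E2})"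
    using finK by (simp add: sum.distrib sum_distrib_left[symmetric])
  also have "complete_edges V \<inter> {e. e \<in> E1} = E1" using E_sub by auto
  also have "complete_edges V \<inter> {e. e \<in> E2} = E2" using E_sub by auto
  finally show ?thesis .
qed

lemma sum_bad:
  "(\<Sum>e\<in>complete_edges V. (of_bool (e \<notin> E0)::nat)) = card E1 + card E2"
proof -
  have "(\<Sum>e\<in>complete_edges V. (of_bool (e \<notin> E0)::nat)) = card (complete_edges V \<inter> {e. e \<notin> E0})"
    using finK by simp
  also have "complete_edges V \<inter> {e. e \<notin> E0} = E1 \<union> E2" using E_sub E_un E_disj by auto
  also have "card (E1 \<union> E2) = card E1 + card E2"
    using E_disj(3) finite_subset[OF E_sub(2) finK] finite_subset[OF E_sub(3) finK] by (simp add: card_Un_disjoint)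
  finally show ?thesis .
qed


lemma card_Diff2: "finite U \<Longrightarrow> p \<in> U \<Longrightarrow> q \<in> U \<Longrightarrow> p \<noteq> q \<Longrightarrow> card (U - {p,q}) = card U - 2"
  by (subst card_Diff_subset) auto

lemma case3:
  assumes Mm: "is_matching E0 M" and u3: "card (V - \<Union>M) = 3"
    and Wb: "card E1 + 2 * card E2 + 3 < 3 * card V"
  shows "\<exists>M. almost_perfect_matching V (complete_edges V) M \<and> good_matching E1 E2 M"
proof (rule ccontr)
  assume noans: "\<not> ?thesis"
  define U where "U = V - \<Union>M"
  have UV: "U \<subseteq> V" and finU: "finite U" and disjU: "U \<inter> \<Union>M = {}"
    using finV unfolding U_def by auto
  have MK: "M \<subseteq> complete_edges V" using matching_K[OF Mm] .
  have MV: "\<Union>M \<subseteq> V" using matching_Union_sub[OF Mm] .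
  have MmK: "is_matching (complete_edges V) M" using matching_mono[OF Mm E_sub(1)] .
  have ME0: "M \<subseteq> E0" using Mm unfolding is_matching_def by auto
  have MdJ: "\<forall>e\<in>M. \<forall>f\<in>M. e \<noteq> f \<longrightarrow> e \<inter> f = {}" using Mm unfolding is_matching_def by auto
  have cU: "card U = 3" using u3 U_def by simp
  have A: "{p,q} \<in> E2" if "p\<in>U" "q\<in>U" "p\<noteq>q" for p q
  proof (rule ccontr)
    assume nE2: "{p,q} \<notin> E2"
    let ?N = "insert {p,q} M"
    have "is_matching (complete_edges V) ?N"
      by (rule matching_insert[OF MmK]) (use that UV disjU in \<open>auto simp: edge_in_complete\<close>)
    moreover have "?N \<subseteq> insert {p,q} E0" using ME0 by auto
    moreover have "V - \<Union>?N = U - {p,q}" by (auto simp: U_def)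
    moreover have "card (U - {p,q}) = 1" using card_Diff2[OF finU that] cU by simp
    ultimately show False using answer[of ?N "{p,q}"] nE2 noans by simp
  qed
  have B: False if ab: "{a,b} \<in> M" and p: "p\<in>U" "p'\<in>U" "p\<noteq>p'" and e1: "{p,a} \<notin> E2" and e2: "{p',b} \<in> E0" for a b p p'
  proof -
    have "{a,b} \<in> complete_edges V" using MK ab by blast
    hence abV: "a \<in> V" "b \<in> V" "a \<noteq> b" by (simp_all add: edge_in_complete)
    have pn: "p \<notin> \<Union>M" "p' \<notin> \<Union>M" using p disjU by auto
    have "a \<in> \<Union>M" using ab by blast
    hence pa: "{p,a} \<in> complete_edges V" using p abV pn UV by (auto simp: edge_in_complete)
    have pb: "{p',b} \<in> complete_edges V" using e2 E_sub(1) by blast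
    let ?N = "insert {p,a} (insert {p',b} (M - {{a,b}}))"
    note sw = swap_matching[OF MmK ab abV(3) pn p(3) pa pb]
    have "?N \<subseteq> insert {p,a} E0" using ME0 e2 by auto
    moreover have "V - \<Union>?N = U - {p,p'}" unfolding sw(2) by (auto simp: U_def)
    moreover have "card (U - {p,p'}) = 1" using card_Diff2[OF finU p] cU by simp
    ultimately show False using answer[OF sw(1), of "{p,a}"] e1 noans by simp
  qed
  define wt where "wt e = (if e \<in> E1 then 1 else if e \<in> E2 then 2 else 0::nat)" for e
  have wt2: "wt e \<le> 2" for e unfolding wt_def by auto
  have wt1: "e \<notin> E2" if "wt e \<le> 1" for e using that E_disj(3) unfolding wt_def by (auto split: if_splits)
  have wt0: "e \<in> E0" if "e \<in> complete_edges V" "wt e = 0" for e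
    using that E_un unfolding wt_def by (auto split: if_splits)
  have C: "\<not> (wt {p,a} \<le> 1 \<and> wt {p',b} = 0)" if "{a,b} \<in> M" "p\<in>U" "p'\<in>U" "p\<noteq>p'" for a b p p'
  proof
    assume h: "wt {p,a} \<le> 1 \<and> wt {p',b} = 0"
    have "b \<in> V" using that(1) MV by auto
    moreover have "p' \<in> V" "p' \<notin> \<Union>M" using that UV disjU by auto
    moreover have "b \<in> \<Union>M" using that(1) by blast
    ultimately have "{p',b} \<in> complete_edges V" by (auto simp: edge_in_complete)
    thus False using B[OF that] wt1 wt0 h by blast
  qed
  obtain x y z where xyz: "U = {x,y,z}" "x \<noteq> y" "y \<noteq> z" "x \<noteq> z" using cU card_3_iff by metis
  have per: "6 \<le> (\<Sum>p\<in>U. \<Sum>q\<in>f. wt {p,q})" if f: "f \<in> M" for f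
  proof -
    obtain a b where ab: "f = {a,b}" "a \<noteq> b" using MK f complete_edgesE by blast
    have abM: "{a,b} \<in> M" "{b,a} \<in> M" using f ab by (auto simp: insert_commute)
    have xyzU: "x \<in> U" "y \<in> U" "z \<in> U" using xyz by auto
    have "(\<Sum>p\<in>U. \<Sum>q\<in>f. wt {p,q}) = wt {x,a} + wt {y,a} + wt {z,a} + wt {x,b} + wt {y,b} + wt {z,b}"
      using xyz ab by (simp add: algebra_simps)
    also have "\<dots> \<ge> 6"
      by (rule loc6[OF wt2 wt2 wt2 wt2 wt2 wt2 C[OF abM(1) xyzU(1) xyzU(2) xyz(2)] C[OF abM(1) xyzU(1) xyzU(3) xyz(4)] C[OF abM(1) xyzU(2) xyzU(1) xyz(2)[symmetric]] C[OF abM(1) xyzU(2) xyzU(3) xyz(3)] C[OF abM(1) xyzU(3) xyzU(1) xyz(4)[symmetric]] C[OF abM(1) xyzU(3) xyzU(2) xyz(3)[symmetric]] C[OF abM(2) xyzU(1) xyzU(2) xyz(2)] C[OF abM(2) xyzU(1) xyzU(3) xyz(4)] C[OF abM(2) xyzU(2) xyzU(1) xyz(2)[symmetric]] C[OF abM(2) xyzU(2) xyzU(3) xyz(3)] C[OF abM(2) xyzU(3) xyzU(1) xyz(4)[symmetric]] C[OF abM(2) xyzU(3) xyzU(2) xyz(3)[symmetric]]])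
    finally show ?thesis .
  qed
  define P1 where "P1 = complete_edges U"
  define P2 where "P2 = {{p,q} | p q. p \<in> U \<and> q \<in> \<Union>M}"
  have P1K: "P1 \<subseteq> complete_edges V" using UV unfolding P1_def complete_edges_def by auto
  have P2K: "P2 \<subseteq> complete_edges V"
  proof
    fix e assume "e \<in> P2"
    then obtain p q where pq: "e = {p,q}" "p \<in> U" "q \<in> \<Union>M" unfolding P2_def by blast
    hence "p \<in> V" "q \<in> V" "p \<noteq> q" using UV MV disjU by auto
    thus "e \<in> complete_edges V" using pq(1) by (simp add: edge_in_complete)
  qed
  have P12: "P1 \<inter> P2 = {}"
  proof -
    { fix e assume "e \<in> P1" "e \<in> P2"
      then obtain p q where "e = {p,q}" "q \<in> \<Union>M" unfolding P2_def by blast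
      moreover have "e \<subseteq> U" using \<open>e \<in> P1\<close> unfolding P1_def complete_edges_def by blast
      ultimately have False using disjU by blast }
    thus ?thesis by blast
  qed
  have finP: "finite P1" "finite P2" using P1K P2K finK finite_subset by blast+
  have cP1: "card P1 = 3" unfolding P1_def complete_edges_def using n_subsets[OF finU, of 2] cU
    by (simp add: choose_two)
  have sP1: "sum wt P1 = 6"
  proof -
    have "sum wt P1 = sum (\<lambda>_. 2) P1"
    proof (intro sum.cong refl)
      fix e assume "e \<in> P1"
      then obtain p q where "e = {p,q}" "p \<in> U" "q \<in> U" "p \<noteq> q" unfolding P1_def by (elim complete_edgesE)
      thus "wt e = 2" using A E_disj(3) unfolding wt_def by auto
    qed
    thus ?thesis using cP1 by simp
  qed
  have sP2: "sum wt P2 \<ge> 6 * card M"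
  proof -
    have "sum wt P2 = (\<Sum>f\<in>M. \<Sum>p\<in>U. \<Sum>q\<in>f. wt {p,q})"
      unfolding P2_def by (rule cross_sum[OF disjU finU MK finV MdJ])
    also have "\<dots> \<ge> (\<Sum>f\<in>M. 6)" by (rule sum_mono) (rule per)
    finally show ?thesis by simp
  qed
  have "sum wt (P1 \<union> P2) \<le> sum wt (complete_edges V)"
    by (rule sum_mono2[OF finK]) (use P1K P2K in auto)
  also have "sum wt (P1 \<union> P2) = sum wt P1 + sum wt P2" by (rule sum.union_disjoint[OF finP P12])
  also have "sum wt (complete_edges V) = card E1 + 2 * card E2" unfolding wt_def by (rule sum_wt)
  finally have W6: "card E1 + 2 * card E2 \<ge> 6 + 6 * card M" using sP1 sP2 by linarith
  have "card U = card V - card (\<Union>M)" unfolding U_def using MV finV by (simp add: card_Diff_subset finite_subset)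
  hence "card V = 3 + 2 * card M" using cU matching_card_Union[OF Mm] card_mono[OF finV MV] by simp
  thus False using W6 Wb by simp
qed


lemma case5:
  assumes Mm: "is_matching E0 M" and maxM: "\<And>M'. is_matching E0 M' \<Longrightarrow> card M' \<le> card M"
    and u5: "card (V - \<Union>M) \<ge> 5" and oddu: "odd (card (V - \<Union>M))"
    and Wb1: "card E1 + 2 * card E2 + 3 < 3 * card V"
    and Wb2: "8 * (card E1 + 2 * card E2) < (card V + 3) * (card V + 5)"
  shows False
proof -
  define U where "U = V - \<Union>M"
  have UV: "U \<subseteq> V" and finU: "finite U" and disjU: "U \<inter> \<Union>M = {}"
    using finV unfolding U_def by auto
  have MK: "M \<subseteq> complete_edges V" using matching_K[OF Mm] .
  have MV: "\<Union>M \<subseteq> V" using matching_Union_sub[OF Mm] .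
  have MdJ: "\<forall>e\<in>M. \<forall>f\<in>M. e \<noteq> f \<longrightarrow> e \<inter> f = {}" using Mm unfolding is_matching_def by auto
  have finM: "finite M" using MK finK finite_subset by blast
  define u where "u = card U"
  define m where "m = card M"
  have Mab: "a \<noteq> b" "a \<in> \<Union>M" "b \<in> \<Union>M" if "{a,b} \<in> M" for a b
  proof -
    have "{a,b} \<in> complete_edges V" using MK that by blast
    thus "a \<noteq> b" by (simp add: edge_in_complete)
    show "a \<in> \<Union>M" "b \<in> \<Union>M" using that by blast+
  qed
  have Upair: "{p,q} \<notin> E0" if pq: "p\<in>U" "q\<in>U" "p\<noteq>q" for p q
  proof
    assume E: "{p,q} \<in> E0"
    have "is_matching E0 (insert {p,q} M)"
      by (rule matching_insert[OF Mm E]) (use pq disjU in auto)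
    moreover have "\<Union>(insert {p,q} M) = \<Union>M \<union> {p,q}" by auto
    ultimately show False using aug_contra[OF maxM Mm] pq disjU by blast
  qed
  have noswap: "x = y" if ab: "{a,b}\<in>M" and xy: "x\<in>U" "y\<in>U" and E: "{x,a}\<in>E0" "{y,b}\<in>E0" for a b x y
  proof (rule ccontr)
    assume ne: "x \<noteq> y"
    have xn: "x \<notin> \<Union>M" "y \<notin> \<Union>M" using xy disjU by auto
    note sw = swap_matching[OF Mm ab Mab(1)[OF ab] xn ne E]
    show False using aug_contra[OF maxM Mm sw(1) sw(2) ne xn] .
  qed
  have nopath: "{b,d} \<notin> E0" if ab: "{a,b}\<in>M" "{c,d}\<in>M" "{a,b}\<noteq>{c,d}" and xy: "x\<in>U" "y\<in>U" "x\<noteq>y"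
     and E: "{x,a}\<in>E0" "{y,c}\<in>E0" for a b c d x y
  proof
    assume bd: "{b,d} \<in> E0"
    have xn: "x \<notin> \<Union>M" "y \<notin> \<Union>M" using xy disjU by auto
    have E': "{c,y} \<in> E0" using E(2) by (simp add: insert_commute)
    note pm = path5_matching[OF Mm ab Mab(1)[OF ab(1)] Mab(1)[OF ab(2)] xn xy(3) E(1) E' bd]
    show False using aug_contra[OF maxM Mm pm(1) pm(2) xy(3) xn] .
  qed
  define hb where "hb e = (of_bool (e \<notin> E0) :: nat)" for e
  define Aset where "Aset q = {p\<in>U. {p,q} \<in> E0}" for q
  define c where "c f = (\<Sum>p\<in>U. \<Sum>q\<in>f. hb {p,q})" for f
  have AsU: "Aset q \<subseteq> U" "finite (Aset q)" "card (Aset q) \<le> u" for q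
    unfolding Aset_def u_def using finU by (auto intro: card_mono)
  have c_ab: "c {a,b} = (u - card (Aset a)) + (u - card (Aset b))" if "a \<noteq> b" for a b
  proof -
    have one: "(\<Sum>p\<in>U. hb {p,q}) = u - card (Aset q)" for q
    proof -
      have "(\<Sum>p\<in>U. hb {p,q}) = card (U \<inter> {p. {p,q} \<notin> E0})" unfolding hb_def using finU by simp
      also have "U \<inter> {p. {p,q} \<notin> E0} = U - Aset q" unfolding Aset_def by auto
      also have "card (U - Aset q) = u - card (Aset q)" unfolding u_def using AsU finU by (simp add: card_Diff_subset)
      finally show ?thesis .
    qed
    have "c {a,b} = (\<Sum>p\<in>U. hb {p,a} + hb {p,b})" unfolding c_def using that by simp
    also have "\<dots> = (\<Sum>p\<in>U. hb {p,a}) + (\<Sum>p\<in>U. hb {p,b})" by (rule sum.distrib)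
    finally show ?thesis using one by simp
  qed
  have u5': "u \<ge> 5" using u5 unfolding u_def U_def .
  have per: "u \<le> c f \<and> (c f \<le> 2*u - 3 \<longrightarrow> (\<exists>a b. f = {a,b} \<and> a \<noteq> b \<and> Aset b = {} \<and> card (Aset a) \<ge> 3))"
    if f: "f \<in> M" for f
  proof -
    obtain a b where ab: "f = {a,b}" "a \<noteq> b" using MK f complete_edgesE by blast
    have abM: "{a,b} \<in> M" using f ab by simp
    have cf: "c f = (u - card (Aset a)) + (u - card (Aset b))" using c_ab[OF ab(2)] ab(1) by simp
    show ?thesis
    proof (cases "Aset a = {}")
      case True
      have "c f = u + (u - card (Aset b))" using cf True by simp
      moreover have "c f \<le> 2*u - 3 \<Longrightarrow> card (Aset b) \<ge> 3" using cf True AsU(3)[of b] u5' by simp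
      moreover have "f = {b,a}" using ab by auto
      ultimately show ?thesis using True ab(2) by (metis le_add1)
    next
      case FA: False
      show ?thesis
      proof (cases "Aset b = {}")
        case True
        have "c f = (u - card (Aset a)) + u" using cf True by simp
        moreover have "c f \<le> 2*u - 3 \<Longrightarrow> card (Aset a) \<ge> 3" using cf True AsU(3)[of a] u5' by simp
        ultimately show ?thesis using True ab by (metis le_add2)
      next
        case FB: False
        obtain y0 where y0: "y0 \<in> Aset b" using FB by blast
        obtain x0 where x0: "x0 \<in> Aset a" using FA by blast
        have "Aset a \<subseteq> {y0}"
        proof
          fix x assume "x \<in> Aset a"
          thus "x \<in> {y0}" using noswap[OF abM, of x y0] y0 unfolding Aset_def by auto
        qed
        hence ca: "card (Aset a) \<le> 1" using card_mono[of "{y0}"] by fastforce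
        have "Aset b \<subseteq> {x0}"
        proof
          fix y assume "y \<in> Aset b"
          thus "y \<in> {x0}" using noswap[OF abM, of x0 y] x0 unfolding Aset_def by auto
        qed
        hence cb: "card (Aset b) \<le> 1" using card_mono[of "{x0}"] by fastforce
        have "c f \<ge> 2*u - 2" using cf ca cb u5' by linarith
        thus ?thesis using u5' by linarith
      qed
    qed
  qed
  define T1 where "T1 = {f\<in>M. c f \<le> 2*u - 3}"
  define t where "t = card T1"
  have T1M: "T1 \<subseteq> M" unfolding T1_def by auto
  have finT1: "finite T1" using finM T1M finite_subset by blast
  have tm: "t \<le> m" unfolding t_def m_def using card_mono[OF finM T1M] .
  define Bl where "Bl = {q \<in> \<Union>T1. Aset q = {}}"
  have T1prop: "\<exists>a b. f = {a,b} \<and> a \<noteq> b \<and> Aset b = {} \<and> card (Aset a) \<ge> 3 \<and> f \<inter> Bl = {b}"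
    if f: "f \<in> T1" for f
  proof -
    from f have fM: "f \<in> M" and cf: "c f \<le> 2*u - 3" unfolding T1_def by auto
    obtain a b where ab: "f = {a,b}" "a \<noteq> b" "Aset b = {}" "card (Aset a) \<ge> 3" using per[OF fM] cf by blast
    have "Aset a \<noteq> {}" using ab(4) by auto
    hence "a \<notin> Bl" unfolding Bl_def by blast
    moreover have "b \<in> \<Union>T1" using f ab(1) by blast
    hence "b \<in> Bl" unfolding Bl_def using ab(3) by blast
    ultimately have "f \<inter> Bl = {b}" using ab(1) by blast
    thus ?thesis using ab by blast
  qed
  have cBl: "card Bl = t"
  proof -
    have BT: "Bl \<subseteq> \<Union>T1" unfolding Bl_def by blast
    hence eq: "Bl = (\<Union>f\<in>T1. f \<inter> Bl)" by blast
    have "Bl \<subseteq> V" using BT T1M MV by blast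
    hence finBl': "finite Bl" using finV by (rule finite_subset)
    have "card (\<Union>f\<in>T1. f \<inter> Bl) = (\<Sum>f\<in>T1. card (f \<inter> Bl))"
    proof (rule card_UN_disjoint[OF finT1])
      show "\<forall>i\<in>T1. finite (i \<inter> Bl)" using finBl' by simp
      show "\<forall>i\<in>T1. \<forall>j\<in>T1. i \<noteq> j \<longrightarrow> i \<inter> Bl \<inter> (j \<inter> Bl) = {}"
      proof (intro ballI impI)
        fix i j assume ij: "i \<in> T1" "j \<in> T1" "i \<noteq> j"
        hence "i \<inter> j = {}" using MdJ T1M by blast
        thus "i \<inter> Bl \<inter> (j \<inter> Bl) = {}" by blast
      qed
    qed
    with arg_cong[OF eq, of card] have "card Bl = (\<Sum>f\<in>T1. card (f \<inter> Bl))" by (rule trans)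
    also have "\<dots> = (\<Sum>f\<in>T1. 1)"
    proof (rule sum.cong[OF refl])
      fix f assume "f \<in> T1"
      then obtain b where "f \<inter> Bl = {b}" using T1prop by blast
      thus "card (f \<inter> Bl) = 1" by simp
    qed
    finally show ?thesis unfolding t_def by simp
  qed
  have BlM: "Bl \<subseteq> \<Union>M" unfolding Bl_def using T1M by auto
  have P3bad: "e \<in> complete_edges V \<and> e \<notin> E0" if e: "e \<in> complete_edges Bl" for e
  proof -
    obtain b d where bd: "e = {b,d}" "b \<noteq> d" "b \<in> Bl" "d \<in> Bl" using e by (elim complete_edgesE)
    obtain f1 where f1: "f1 \<in> T1" "b \<in> f1" using bd(3) unfolding Bl_def by blast
    obtain f2 where f2: "f2 \<in> T1" "d \<in> f2" using bd(4) unfolding Bl_def by blast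
    obtain a1 b1 where p1: "f1 = {a1,b1}" "a1 \<noteq> b1" "card (Aset a1) \<ge> 3" "f1 \<inter> Bl = {b1}"
      using T1prop[OF f1(1)] by blast
    obtain a2 b2 where p2: "f2 = {a2,b2}" "a2 \<noteq> b2" "card (Aset a2) \<ge> 3" "f2 \<inter> Bl = {b2}"
      using T1prop[OF f2(1)] by blast
    have bb: "b = b1" using p1(4) f1(2) bd(3) by blast
    have dd: "d = b2" using p2(4) f2(2) bd(4) by blast
    have f12: "f1 \<noteq> f2" using p1(4) p2(4) bb dd bd(2) by auto
    have "Aset a2 \<noteq> {}" using p2(3) by (metis card.empty not_numeral_le_zero)
    then obtain y where y: "y \<in> Aset a2" by blast
    have "card (Aset a1 - {y}) \<ge> 2" using p1(3) AsU(2)[of a1] by (auto simp: card_Diff_singleton_if)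
    hence "Aset a1 - {y} \<noteq> {}" by (metis card.empty not_numeral_le_zero)
    then obtain x where x: "x \<in> Aset a1 - {y}" by blast
    have "{b1,b2} \<notin> E0"
      by (rule nopath[of a1 b1 a2 b2 x y]) (use f1 f2 p1 p2 T1M f12 x y in \<open>auto simp: Aset_def\<close>)
    moreover have "b \<in> V" "d \<in> V" using bd BlM MV by auto
    ultimately show ?thesis using bb dd bd by (simp add: edge_in_complete)
  qed
  define P1 where "P1 = complete_edges U"
  define P2 where "P2 = {{p,q} | p q. p \<in> U \<and> q \<in> \<Union>M}"
  define P3 where "P3 = complete_edges Bl"
  have P1K: "P1 \<subseteq> complete_edges V" using UV unfolding P1_def complete_edges_def by auto
  have P2K: "P2 \<subseteq> complete_edges V"
  proof
    fix e assume "e \<in> P2"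
    then obtain p q where pq: "e = {p,q}" "p \<in> U" "q \<in> \<Union>M" unfolding P2_def by blast
    hence "p \<in> V" "q \<in> V" "p \<noteq> q" using UV MV disjU by auto
    thus "e \<in> complete_edges V" using pq(1) by (simp add: edge_in_complete)
  qed
  have P3K: "P3 \<subseteq> complete_edges V" using P3bad unfolding P3_def by blast
  have P12: "P1 \<inter> P2 = {}"
  proof -
    { fix e assume "e \<in> P1" "e \<in> P2"
      then obtain p q where "e = {p,q}" "q \<in> \<Union>M" unfolding P2_def by blast
      moreover have "e \<subseteq> U" using \<open>e \<in> P1\<close> unfolding P1_def complete_edges_def by blast
      ultimately have False using disjU by blast }
    thus ?thesis by blast
  qed
  have P13: "(P1 \<union> P2) \<inter> P3 = {}"
  proof -
    { fix e assume e12: "e \<in> P1 \<union> P2" and e3: "e \<in> P3"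
      have "e \<subseteq> Bl" using e3 unfolding P3_def complete_edges_def by simp
      hence eB: "e \<subseteq> \<Union>M" using BlM by (rule order_trans)
      obtain b d where bd: "e = {b,d}" using e3 unfolding P3_def by (elim complete_edgesE)
      have "\<exists>p. p \<in> e \<and> p \<in> U"
      proof (cases "e \<in> P1")
        case True
        hence "e \<subseteq> U" unfolding P1_def complete_edges_def by simp
        thus ?thesis using bd by blast
      next
        case False
        hence "e \<in> P2" using e12 by simp
        then obtain p q where "e = {p,q}" "p \<in> U" unfolding P2_def by blast
        thus ?thesis by blast
      qed
      hence False using eB disjU by blast }
    thus ?thesis by blast
  qed
  have finP: "finite P1" "finite P2" "finite P3"
    using finite_subset[OF P1K finK] finite_subset[OF P2K finK] finite_subset[OF P3K finK] .
  have cP1: "card P1 = u choose 2" unfolding P1_def complete_edges_def u_def using n_subsets[OF finU, of 2] by simp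
  have finBl: "finite Bl" using finite_subset[OF BlM finite_subset[OF MV finV]] .
  have cP3: "card P3 = t choose 2" unfolding P3_def complete_edges_def using n_subsets[OF finBl, of 2] cBl by simp
  have sP1: "sum hb P1 = card P1"
  proof -
    have "sum hb P1 = sum (\<lambda>_. 1) P1"
    proof (intro sum.cong refl)
      fix e assume "e \<in> P1"
      then obtain p q where "e = {p,q}" "p \<in> U" "q \<in> U" "p \<noteq> q" unfolding P1_def by (elim complete_edgesE)
      thus "hb e = 1" using Upair unfolding hb_def by auto
    qed
    thus ?thesis by simp
  qed
  have sP3: "sum hb P3 = card P3"
  proof -
    have "sum hb P3 = sum (\<lambda>_. 1) P3"
    proof (rule sum.cong[OF refl])
      fix e assume "e \<in> P3"
      hence "e \<notin> E0" using P3bad unfolding P3_def by blast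
      thus "hb e = 1" unfolding hb_def by simp
    qed
    thus ?thesis by simp
  qed
  have sP2: "sum hb P2 = (\<Sum>f\<in>M. c f)"
    unfolding P2_def c_def by (rule cross_sum[OF disjU finU MK finV MdJ])
  have "sum hb (P1 \<union> P2 \<union> P3) \<le> sum hb (complete_edges V)"
    by (rule sum_mono2[OF finK]) (use P1K P2K P3K in auto)
  also have "sum hb (P1 \<union> P2 \<union> P3) = sum hb P1 + sum hb P2 + sum hb P3"
    using finP P12 P13 by (simp add: sum.union_disjoint)
  also have "sum hb (complete_edges V) = card E1 + card E2" unfolding hb_def by (rule sum_bad)
  finally have Wge: "card E1 + card E2 \<ge> (u choose 2) + (\<Sum>f\<in>M. c f) + (t choose 2)"
    using sP1 sP2 sP3 cP1 cP3 by simp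
  have cV: "card V = u + 2*m"
  proof -
    have "u = card V - card (\<Union>M)" unfolding u_def U_def using MV finV by (simp add: card_Diff_subset finite_subset)
    thus ?thesis using matching_card_Union[OF Mm] card_mono[OF finV MV] unfolding m_def by simp
  qed
  define W where "W = card E1 + 2 * card E2"
  have WW: "W \<ge> (u choose 2) + (\<Sum>f\<in>M. c f) + (t choose 2)" using Wge unfolding W_def by simp
  have sumc1: "(\<Sum>f\<in>M. c f) \<ge> u * m"
  proof -
    have "(\<Sum>f\<in>M. c f) \<ge> (\<Sum>f\<in>M. u)" by (rule sum_mono) (use per in blast)
    thus ?thesis unfolding m_def by (simp add: mult.commute)
  qed
  have oddu': "odd u" using oddu unfolding u_def U_def .
  show False
  proof (cases "u \<ge> 6")
    case True
    have "W \<ge> u*(u-1) div 2 + u*m" using WW sumc1 by (simp add: choose_two)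
    hence "W + 3 \<ge> 3*(u+2*m)" by (rule arith7[OF True])
    thus False using Wb1 cV unfolding W_def by simp
  next
    case False
    hence u5e: "u = 5" using u5' oddu' by presburger
    have "(\<Sum>f\<in>M. c f) = (\<Sum>f\<in>T1. c f) + (\<Sum>f\<in>M - T1. c f)"
      using sum.subset_diff[OF T1M finM, of c] by (simp add: add.commute)
    moreover have "(\<Sum>f\<in>T1. c f) \<ge> (\<Sum>f\<in>T1. 5)" by (rule sum_mono) (use per T1M u5e in auto)
    moreover have "(\<Sum>f\<in>M - T1. c f) \<ge> (\<Sum>f\<in>M - T1. 8)" by (rule sum_mono) (use u5e in \<open>auto simp: T1_def\<close>)
    moreover have "card (M - T1) = m - t" unfolding m_def t_def using card_Diff_subset[OF finT1 T1M] .
    ultimately have "(\<Sum>f\<in>M. c f) \<ge> 5*t + 8*(m-t)" unfolding t_def by simp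
    hence "W \<ge> 10 + 5*t + 8*(m-t) + t*(t-1) div 2" using WW u5e by (simp add: choose_two)
    from arith5[OF tm this] show False using Wb1 Wb2 cV u5e unfolding W_def by simp
  qed
qed


lemma main:
  assumes oddV: "odd (card V)"
    and Wb1: "card E1 + 2 * card E2 + 3 < 3 * card V"
    and Wb2: "8 * (card E1 + 2 * card E2) < (card V + 3) * (card V + 5)"
  shows "\<exists>M. almost_perfect_matching V (complete_edges V) M \<and> good_matching E1 E2 M"
proof -
  obtain M where Mm: "is_matching E0 M" and maxM: "\<And>M'. is_matching E0 M' \<Longrightarrow> card M' \<le> card M"
    using max_matching_exists by blast
  define u where "u = card (V - \<Union>M)"
  have MV: "\<Union>M \<subseteq> V" using matching_Union_sub[OF Mm] .
  have "u = card V - card (\<Union>M)" unfolding u_def using MV finV by (simp add: card_Diff_subset finite_subset)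
  hence cV: "card V = u + 2 * card M" using matching_card_Union[OF Mm] card_mono[OF finV MV] by simp
  hence oddu: "odd u" using oddV by simp
  have "u = 1 \<or> u = 3 \<or> u \<ge> 5" using oddu by presburger
  then consider "u = 1" | "u = 3" | "u \<ge> 5" by blast
  thus ?thesis
  proof cases
    case 1
    have "{} \<notin> E2" using E_sub(3) unfolding complete_edges_def by auto
    moreover have "is_matching (complete_edges V) M" using matching_mono[OF Mm E_sub(1)] .
    moreover have "M \<subseteq> insert {} E0" using Mm unfolding is_matching_def by auto
    ultimately show ?thesis using answer[of M "{}"] 1 unfolding u_def by blast
  next
    case 2
    show ?thesis by (rule case3[OF Mm]) (use 2 Wb1 in \<open>simp_all add: u_def\<close>)
  next
    case 3
    have False by (rule case5[OF Mm maxM]) (use 3 oddu Wb1 Wb2 in \<open>simp_all add: u_def\<close>)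
    thus ?thesis ..
  qed
qed

end

theorem lemma14:
  fixes r k :: nat and E0 E1 E2 :: "nat set set"
  assumes "r > 0" and "k > 0"
    and "(r + k) mod 2 = 1"
    and "k \<le> r"
    and "ordered_partition3 (complete_edges {1..r+k}) E0 E1 E2"
    and "real (card E1 + 2 * card E2) <
           min (3 * (real (r + k) - 1)) ((real (r + k) + 3) * (real (r + k) + 5) / 8)"
  shows "\<exists>M. almost_perfect_matching {1..r+k} (complete_edges {1..r+k}) M
             \<and> good_matching E1 E2 M"
proof -
  define W where "W = card E1 + 2 * card E2"
  define n where "n = r + k"
  have cV: "card {1..r+k} = n" unfolding n_def by simp
  have h1: "real W < 3 * (real n - 1)" and h2: "real W < (real n + 3) * (real n + 5) / 8"
    using assms(6) unfolding W_def n_def by simp_all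
  have "real (W + 3) < real (3 * n)" using h1 by simp
  hence w1: "W + 3 < 3 * n" by (simp only: of_nat_less_iff)
  have "real (8 * W) < real ((n + 3) * (n + 5))" using h2 by simp
  hence w2: "8 * W < (n + 3) * (n + 5)" by (simp only: of_nat_less_iff)
  have oddn: "odd n" using assms(3) unfolding n_def by presburger
  show ?thesis
    by (rule main[OF finite_atLeastAtMost assms(5)]) (use cV oddn w1 w2 in \<open>simp_all add: W_def\<close>)
qed

end
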